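(* Let $\lambda_0,\lambda\in\{-1,0,1\}$ and let $U:\mathbb{H}^1_{\lambda_0}\to\mathbb{H}^1_\lambda$, $$U=\frac{1}{\sqrt{|F_1|^2-\lambda|F_2|^2}}\begin{pmatrix}F_1&\lambda\bar F_2\\ F_2&\bar F_1\end{pmatrix},\qquad |F_1|^2>\lambda|F_2|^2,$$ be a bundle map covering a holomorphic map $f:M_0\to M$ (so $\pi_\lambda\circ U=f\circ\pi_{\lambda_0}$), and let $\mathcal{A}=U^{-1}dU$. Let $s$ be the section $s(z)=\frac{1}{\sqrt{1-\lambda_0|z|^2}}\begin{pmatrix}1&\lambda_0\bar z\\ z&1\end{pmatrix}$ of $\pi_{\lambda_0}$, let $f_1=F_1\circ s$, and for $z$ not a zero of $f_1$ let $r_{f_1}(z)=\begin{pmatrix}\bar f_1/|f_1|&0\\0&f_1/|f_1|\end{pmatrix}\in\mathbb{H}^1_\lambda$. Let $\hat A=-\Gamma t_0+\frac i2(e\,t_--\bar e\,t_+)$ be the connection on $M$ built from $e=\frac{2dz}{1-\lambda|z|^2}$ and $\Gamma=-i\lambda\frac{z\,d\bar z-\bar z\,dz}{1-\lambda|z|^2}$. Then, away from the zeros of $f_1$ (where $r_{f_1}$ is possibly singular), $$f^*\hat A=r_{f_1}^{-1}\,(s^*\mathcal{A})\,r_{f_1}+r_{f_1}^{-1}dr_{f_1}.$$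
   Context: For $\mu\in\{-1,0,1\}$, $\mathbb{H}^1_\mu=\left\{\begin{pmatrix} z_1&\mu\bar z_2\\ z_2&\bar z_1\end{pmatrix}: |z_1|^2-\mu|z_2|^2=1\right\}$, with projection $\pi_\mu(h)=z_2/z_1$ onto the constant-curvature surface $M_\mu$ (Riemann sphere, $\mathbb{C}$, or unit disc for $\mu=-1,0,1$, metric $4dzd\bar z/(1-\mu|z|^2)^2$); $M_0=M_{\lambda_0}$, $M=M_\lambda$. The Lie algebra of $\mathbb{H}^1_\lambda$ has basis $t_0=-\frac{i}{2}\begin{pmatrix}1&0\\0&-1\end{pmatrix}$, $t_1=-\frac{i}{2}\begin{pmatrix}0&-\lambda\\1&0\end{pmatrix}$, $t_2=\frac12\begin{pmatrix}0&\lambda\\1&0\end{pmatrix}$, $t_\pm=t_1\pm it_2$. A bundle map sends fibres of $\pi_{\lambda_0}$ into fibres of $\pi_\lambda$. The section $s$ is defined where $1-\lambda_0|z|^2>0$ (only locally, on $\mathbb{C}$, when $\lambda_0=-1$). *)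

theory Defs
  imports "HOL-Analysis.Analysis"
begin

text \<open>2x2 complex matrices are rendered as complex^2^2 (rows indexed by 1,2).\<close>

definition mat2 :: "complex \<Rightarrow> complex \<Rightarrow> complex \<Rightarrow> complex \<Rightarrow> complex^2^2" where
  "mat2 a b c d = (\<chi> i j. if i = 1 then (if j = 1 then a else b) else (if j = 1 then c else d))"

definition msc :: "complex \<Rightarrow> complex^2^2 \<Rightarrow> complex^2^2" where
  "msc c A = (\<chi> i j. c * A $ i $ j)"

text \<open>The group H^1_mu.\<close>
definition Hgrp :: "real \<Rightarrow> (complex^2^2) set" where
  "Hgrp mu = {mat2 z1 (complex_of_real mu * cnj z2) z2 (cnj z1) | z1 z2.
                (cmod z1)^2 - mu * (cmod z2)^2 = 1}"

text \<open>Projection pi_mu(h) = z2/z1 (finite part of M_mu).\<close>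
definition proj :: "complex^2^2 \<Rightarrow> complex" where
  "proj h = h $ 2 $ 1 / h $ 1 $ 1"

text \<open>The section s of pi_mu, defined where 1 - mu |z|^2 > 0.\<close>
definition sect :: "real \<Rightarrow> complex \<Rightarrow> complex^2^2" where
  "sect mu z = msc (complex_of_real (1 / sqrt (1 - mu * (cmod z)^2)))
                   (mat2 1 (complex_of_real mu * cnj z) z 1)"

text \<open>The bundle map U built from F1, F2 (target parameter lam).\<close>
definition Umap :: "real \<Rightarrow> (complex^2^2 \<Rightarrow> complex) \<Rightarrow> (complex^2^2 \<Rightarrow> complex)
                      \<Rightarrow> complex^2^2 \<Rightarrow> complex^2^2" where
  "Umap lam F1 F2 h = msc (complex_of_real (1 / sqrt ((cmod (F1 h))^2 - lam * (cmod (F2 h))^2)))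
                          (mat2 (F1 h) (complex_of_real lam * cnj (F2 h)) (F2 h) (cnj (F1 h)))"

text \<open>r_{f1}(z) = diag(conj f1/|f1|, f1/|f1|).\<close>
definition rmat :: "(complex \<Rightarrow> complex) \<Rightarrow> complex \<Rightarrow> complex^2^2" where
  "rmat f1 z = mat2 (cnj (f1 z) / complex_of_real (cmod (f1 z))) 0
                    0 (f1 z / complex_of_real (cmod (f1 z)))"

text \<open>Lie algebra basis of H^1_lam.\<close>
definition t0 :: "complex^2^2" where
  "t0 = msc (- \<i> / 2) (mat2 1 0 0 (-1))"
definition t1 :: "real \<Rightarrow> complex^2^2" where
  "t1 lam = msc (- \<i> / 2) (mat2 0 (- complex_of_real lam) 1 0)"
definition t2 :: "real \<Rightarrow> complex^2^2" where
  "t2 lam = msc (1 / 2) (mat2 0 (complex_of_real lam) 1 0)"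
definition tplus :: "real \<Rightarrow> complex^2^2" where
  "tplus lam = t1 lam + msc \<i> (t2 lam)"
definition tminus :: "real \<Rightarrow> complex^2^2" where
  "tminus lam = t1 lam - msc \<i> (t2 lam)"

text \<open>One-forms on M (point w, tangent vector v):
  e = 2 dz/(1 - lam|z|^2), its conjugate, and Gamma.\<close>
definition form_e :: "real \<Rightarrow> complex \<Rightarrow> complex \<Rightarrow> complex" where
  "form_e lam w v = 2 * v / complex_of_real (1 - lam * (cmod w)^2)"
definition form_ebar :: "real \<Rightarrow> complex \<Rightarrow> complex \<Rightarrow> complex" where
  "form_ebar lam w v = 2 * cnj v / complex_of_real (1 - lam * (cmod w)^2)"
definition form_Gamma :: "real \<Rightarrow> complex \<Rightarrow> complex \<Rightarrow> complex" where
  "form_Gamma lam w v = - \<i> * complex_of_real lam * (w * cnj v - cnj w * v)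
                          / complex_of_real (1 - lam * (cmod w)^2)"

text \<open>The connection A-hat = -Gamma t0 + (i/2)(e t_- - ebar t_+) on M.\<close>
definition Ahat :: "real \<Rightarrow> complex \<Rightarrow> complex \<Rightarrow> complex^2^2" where
  "Ahat lam w v = msc (- form_Gamma lam w v) t0
     + msc (\<i> / 2) (msc (form_e lam w v) (tminus lam) - msc (form_ebar lam w v) (tplus lam))"

end

theory Submission imports Defs begin

lemma two_ne_one2: "(2::2) \<noteq> 1" by simp

lemma mat2_nth[simp]: "mat2 a b c d $ 1 $ 1 = a" "mat2 a b c d $ 1 $ 2 = b"
  "mat2 a b c d $ 2 $ 1 = c" "mat2 a b c d $ 2 $ 2 = d"
  by (simp_all add: mat2_def)

lemma mat2_expand: "(A::complex^2^2) = mat2 (A$1$1) (A$1$2) (A$2$1) (A$2$2)"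
  by (simp add: vec_eq_iff forall_2)

lemma mat2_eq_iff: "mat2 a b c d = mat2 a' b' c' d' \<longleftrightarrow> a = a' \<and> b = b' \<and> c = c' \<and> d = d'"
  by (metis mat2_nth)

lemma mat2_add: "mat2 a b c d + mat2 a' b' c' d' = mat2 (a+a') (b+b') (c+c') (d+d')"
  by (simp add: vec_eq_iff forall_2)
lemma mat2_diff: "mat2 a b c d - mat2 a' b' c' d' = mat2 (a-a') (b-b') (c-c') (d-d')"
  by (simp add: vec_eq_iff forall_2)
lemma mat2_scaleR: "r *\<^sub>R mat2 a b c d = mat2 (r *\<^sub>R a) (r *\<^sub>R b) (r *\<^sub>R c) (r *\<^sub>R d)"
  by (simp add: vec_eq_iff forall_2)
lemma mat2_zero: "(0::complex^2^2) = mat2 0 0 0 0"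
  by (simp add: vec_eq_iff forall_2)
lemma mat2_one: "(mat 1::complex^2^2) = mat2 1 0 0 1"
  by (simp add: vec_eq_iff forall_2 mat_def)
lemma msc_mat2: "msc k (mat2 a b c d) = mat2 (k*a) (k*b) (k*c) (k*d)"
  by (simp add: vec_eq_iff forall_2 msc_def)
lemma mat2_mult: "mat2 a b c d ** mat2 a' b' c' d' = mat2 (a*a'+b*c') (a*b'+b*d') (c*a'+d*c') (c*b'+d*d')"
  by (simp add: vec_eq_iff forall_2 matrix_matrix_mult_def sum_2)

lemma matrix_inv_eq:
  fixes A B :: "complex^2^2"
  assumes "A ** B = mat 1" "B ** A = mat 1"
  shows "matrix_inv A = B"
proof -
  have "\<exists>C. A ** C = mat 1 \<and> C ** A = mat 1" using assms by blast
  then have C: "A ** matrix_inv A = mat 1 \<and> matrix_inv A ** A = mat 1"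
    unfolding matrix_inv_def by (rule someI_ex)
  have "matrix_inv A = matrix_inv A ** (A ** B)" using assms by (simp add: matrix_mul_rid)
  also have "\<dots> = B" using C by (simp add: matrix_mul_assoc matrix_mul_lid)
  finally show ?thesis .
qed

definition Phi :: "(complex \<times> complex) \<times> (complex \<times> complex) \<Rightarrow> complex^2^2" where
  "Phi p = mat2 (fst (fst p)) (snd (fst p)) (fst (snd p)) (snd (snd p))"

lemma linear_Phi: "linear Phi"
  by (rule linearI) (auto simp: Phi_def mat2_add mat2_scaleR)

lemma bl_Phi: "bounded_linear Phi"
  using linear_Phi linear_conv_bounded_linear by blast

lemma mat2_has_derivative:
  assumes "(a has_derivative a') (at x0 within S)" "(b has_derivative b') (at x0 within S)" "(c has_derivative c') (at x0 within S)" "(d has_derivative d') (at x0 within S)"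
  shows "((\<lambda>x. mat2 (a x) (b x) (c x) (d x)) has_derivative (\<lambda>v. mat2 (a' v) (b' v) (c' v) (d' v))) (at x0 within S)"
proof -
  have "((\<lambda>x. Phi ((a x, b x), (c x, d x))) has_derivative (\<lambda>v. Phi ((a' v, b' v), (c' v, d' v)))) (at x0 within S)"
    by (rule bounded_linear.has_derivative[OF bl_Phi]) (intro has_derivative_Pair assms)
  then show ?thesis by (simp add: Phi_def)
qed

lemma alg0:
  fixes a A b B da dA db dB N m l :: complex
  assumes nz: "N \<noteq> 0" "m \<noteq> 0" "a \<noteq> 0" "A \<noteq> 0"
    and hN: "N*N = a*A - l*b*B" and hm: "m*m = a*A"
  shows "mat2 (l*((b/a)*((dB*A - B*dA)/(A*A)) - (B/A)*((db*a - b*da)/(a*a)))/(2*(1 - l*(b/a)*(B/A))))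
              (l*((dB*A - B*dA)/(A*A))/(1 - l*(b/a)*(B/A)))
              (((db*a - b*da)/(a*a))/(1 - l*(b/a)*(B/A)))
              (-(l*((b/a)*((dB*A - B*dA)/(A*A)) - (B/A)*((db*a - b*da)/(a*a))))/(2*(1 - l*(b/a)*(B/A))))
   = mat2 (a/m) 0 0 (A/m) ** (mat2 (A/N) (-l*B/N) (-b/N) (a/N) **
       mat2 (-(a*dA + A*da - l*(b*dB + B*db))/(2*N^3)*a + da/N) (-(a*dA + A*da - l*(b*dB + B*db))/(2*N^3)*(l*B) + l*dB/N)
            (-(a*dA + A*da - l*(b*dB + B*db))/(2*N^3)*b + db/N) (-(a*dA + A*da - l*(b*dB + B*db))/(2*N^3)*A + dA/N))
     ** mat2 (A/m) 0 0 (a/m)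
   + mat2 (a/m) 0 0 (A/m) ** mat2 (dA/m - A*((a*dA + A*da)/(2*m))/(m*m)) 0 0 (da/m - a*((a*dA + A*da)/(2*m))/(m*m))"
proof -
  have D: "1 - l*(b/a)*(B/A) = N*N/(a*A)" using nz hN by (simp add: field_simps)
  have m2: "m^2 = a*A" using hm by (simp add: power2_eq_square)
  have N2: "N^2 = a*A - l*b*B" using hN by (simp add: power2_eq_square)
  show ?thesis
    unfolding mat2_mult mat2_add mat2_eq_iff D
    using nz
    apply (intro conjI)
    apply (simp_all add: field_simps)
    using hN hm
    apply -
    subgoal by algebra
    subgoal by algebra
    subgoal by algebra
    subgoal by algebra
    done
qed

lemma alg:
  fixes a A b B da dA db dB N m l w wb u ub :: complex
  assumes nz: "N \<noteq> 0" "m \<noteq> 0" "a \<noteq> 0" "A \<noteq> 0"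
    and hN: "N*N = a*A - l*b*B" and hm: "m*m = a*A"
    and hw: "w = b/a" "wb = B/A" "u = (db*a - b*da)/(a*a)" "ub = (dB*A - B*dA)/(A*A)"
  shows "mat2 (l*(w*ub - wb*u)/(2*(1 - l*w*wb))) (l*ub/(1 - l*w*wb)) (u/(1 - l*w*wb))
              (-(l*(w*ub - wb*u))/(2*(1 - l*w*wb)))
   = mat2 (a/m) 0 0 (A/m) ** (mat2 (A/N) (-l*B/N) (-b/N) (a/N) **
       mat2 (-(a*dA + A*da - l*(b*dB + B*db))/(2*N^3)*a + da/N) (-(a*dA + A*da - l*(b*dB + B*db))/(2*N^3)*(l*B) + l*dB/N)
            (-(a*dA + A*da - l*(b*dB + B*db))/(2*N^3)*b + db/N) (-(a*dA + A*da - l*(b*dB + B*db))/(2*N^3)*A + dA/N))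
     ** mat2 (A/m) 0 0 (a/m)
   + mat2 (a/m) 0 0 (A/m) ** mat2 (dA/m - A*((a*dA + A*da)/(2*m))/(m*m)) 0 0 (da/m - a*((a*dA + A*da)/(2*m))/(m*m))"
  unfolding hw by (rule alg0[OF nz hN hm])

lemma Ahat_mat2:
  assumes "1 - complex_of_real lam * w * cnj w \<noteq> 0"
  shows "Ahat lam w u = mat2 (of_real lam*(w*cnj u - cnj w*u)/(2*(1 - of_real lam * w * cnj w)))
     (of_real lam*cnj u/(1 - of_real lam * w * cnj w)) (u/(1 - of_real lam * w * cnj w))
     (-(of_real lam*(w*cnj u - cnj w*u))/(2*(1 - of_real lam * w * cnj w)))"
proof -
  have D: "complex_of_real (1 - lam * (cmod w)^2) = 1 - of_real lam * w * cnj w"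
  proof -
    have "complex_of_real (1 - lam * (cmod w)^2) = 1 - of_real lam * complex_of_real ((cmod w)^2)" by simp
    also have "\<dots> = 1 - of_real lam * w * cnj w" by (simp only: complex_norm_square mult.assoc)
    finally show ?thesis .
  qed
  show ?thesis
    unfolding Ahat_def form_e_def form_ebar_def form_Gamma_def D t0_def tplus_def tminus_def t1_def t2_def
    using assms
    by (simp add: msc_mat2 mat2_add mat2_diff mat2_eq_iff field_simps)
qed

lemma inner_complex_eq: "complex_of_real (x \<bullet> y) = (x * cnj y + cnj x * y) / 2"
  by (simp add: complex_eq_iff inner_complex_def)

theorem corollary4p5:
  fixes lam0 lam :: real
    and F1 F2 :: "complex^2^2 \<Rightarrow> complex"
    and f :: "complex \<Rightarrow> complex"
  assumes lam0: "lam0 \<in> {-1, 0, 1}"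
    and lam: "lam \<in> {-1, 0, 1}"
    and pos: "\<forall>h\<in>Hgrp lam0. (cmod (F1 h))^2 > lam * (cmod (F2 h))^2"
    and smooth: "\<forall>h\<in>Hgrp lam0. F1 differentiable (at h within Hgrp lam0)
                               \<and> F2 differentiable (at h within Hgrp lam0)"
    and cover: "\<forall>h\<in>Hgrp lam0. h $ 1 $ 1 \<noteq> 0 \<and> F1 h \<noteq> 0
                   \<longrightarrow> proj (Umap lam F1 F2 h) = f (proj h)"
    and holo: "f holomorphic_on {z. 1 - lam0 * (cmod z)^2 > 0 \<and> F1 (sect lam0 z) \<noteq> 0}"
  shows "\<forall>z. 1 - lam0 * (cmod z)^2 > 0 \<and> (F1 \<circ> sect lam0) z \<noteq> 0 \<longrightarrow>
           (\<forall>v. Ahat lam (f z) (frechet_derivative f (at z) v)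
                = matrix_inv (rmat (F1 \<circ> sect lam0) z)
                    ** (matrix_inv (Umap lam F1 F2 (sect lam0 z))
                        ** frechet_derivative (Umap lam F1 F2 \<circ> sect lam0) (at z) v)
                    ** rmat (F1 \<circ> sect lam0) z
                  + matrix_inv (rmat (F1 \<circ> sect lam0) z)
                    ** frechet_derivative (rmat (F1 \<circ> sect lam0)) (at z) v)"
proof (intro allI impI)
  fix z v
  assume zass: "1 - lam0 * (cmod z)^2 > 0 \<and> (F1 \<circ> sect lam0) z \<noteq> 0"
  define S where "S = {y::complex. 1 - lam0 * (y \<bullet> y) > 0}"
  have S_alt: "y \<in> S \<longleftrightarrow> 1 - lam0 * (cmod y)^2 > 0" for y
    by (simp add: S_def power2_norm_eq_inner)
  have openS: "open S" unfolding S_def by (intro open_Collect_less continuous_intros)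
  have zS: "z \<in> S" using zass S_alt by blast
  define k where "k (y::complex) = complex_of_real (1 / sqrt (1 - lam0 * (y \<bullet> y)))" for y
  have sect_eq: "sect lam0 y = mat2 (k y) (k y * (of_real lam0 * cnj y)) (k y * y) (k y)" for y
    by (simp add: sect_def k_def msc_mat2 power2_norm_eq_inner)
  have sect_in: "sect lam0 y \<in> Hgrp lam0" if yS: "y \<in> S" for y
  proof -
    define t where "t = 1 - lam0 * (cmod y)^2"
    have t: "t > 0" using yS S_alt t_def by simp
    have ky: "k y = complex_of_real (1 / sqrt t)" by (simp add: k_def t_def power2_norm_eq_inner)
    have "sect lam0 y = mat2 (k y) (complex_of_real lam0 * cnj (k y * y)) (k y * y) (cnj (k y))"
      unfolding sect_eq ky by (simp add: mult.commute mult.left_commute)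
    moreover have "(cmod (k y))^2 - lam0 * (cmod (k y * y))^2 = 1"
    proof -
      have n1: "cmod (k y) = 1 / sqrt t" using t by (simp add: ky norm_divide)
      have n2: "cmod (k y * y) = cmod y / sqrt t" by (simp add: norm_mult n1)
      have "(1 / sqrt t)^2 - lam0 * (cmod y / sqrt t)^2 = (1 - lam0 * (cmod y)^2) / t"
        using t by (simp add: power_divide field_simps)
      also have "\<dots> = 1" using t t_def by simp
      finally show ?thesis by (simp add: n1 n2)
    qed
    ultimately show ?thesis unfolding Hgrp_def by blast
  qed
  have sect_der: "sect lam0 differentiable (at y)" if yS: "y \<in> S" for y
  proof -
    have pos: "1 - lam0 * (y \<bullet> y) > 0" using yS S_def by simp
    show ?thesis unfolding sect_eq[abs_def] k_def
      apply (insert pos)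
      apply (rule differentiableI)
      apply (rule mat2_has_derivative)
      apply (rule derivative_intros | simp)+
      done
  qed
  define f1 where "f1 = F1 \<circ> sect lam0"
  define f2 where "f2 = F2 \<circ> sect lam0"
  have f12d: "f1 differentiable (at y) \<and> f2 differentiable (at y)" if yS: "y \<in> S" for y
  proof -
    have sub: "sect lam0 ` S \<subseteq> Hgrp lam0" using sect_in by blast
    have sd: "sect lam0 differentiable (at y within S)"
      using sect_der[OF yS] by (simp add: at_within_open[OF yS openS])
    have "F1 differentiable (at (sect lam0 y) within sect lam0 ` S)"
      "F2 differentiable (at (sect lam0 y) within sect lam0 ` S)"
      using smooth sect_in[OF yS] differentiable_within_subset[OF _ sub] by blast+
    from differentiable_chain_within[OF sd this(1)] differentiable_chain_within[OF sd this(2)]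
    show ?thesis unfolding f1_def f2_def by (simp add: at_within_open[OF yS openS])
  qed
  have contf1: "continuous_on S f1"
    by (rule differentiable_imp_continuous_on) (simp add: differentiable_on_def f12d differentiable_at_withinI)
  define T where "T = S \<inter> f1 -` (- {0})"
  have openT: "open T" unfolding T_def by (rule continuous_open_preimage[OF contf1 openS]) auto
  have zT: "z \<in> T" using zS zass unfolding T_def f1_def by auto
  define q where "q y = f1 y \<bullet> f1 y - lam * (f2 y \<bullet> f2 y)" for y
  have qpos: "q y > 0" if "y \<in> S" for y
    using pos sect_in[OF that] unfolding q_def f1_def f2_def by (simp add: power2_norm_eq_inner)
  define c where "c y = complex_of_real (1 / sqrt (q y))" for y
  have Umap_eq: "Umap lam F1 F2 (sect lam0 y) = mat2 (c y * f1 y) (c y * (of_real lam * cnj (f2 y))) (c y * f2 y) (c y * cnj (f1 y))" for y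
    by (simp add: Umap_def c_def q_def f1_def f2_def msc_mat2 power2_norm_eq_inner)
  have f_eq: "f y = f2 y / f1 y" if yT: "y \<in> T" for y
  proof -
    have yS: "y \<in> S" and f1y: "f1 y \<noteq> 0" using yT T_def by auto
    have kpos: "k y \<noteq> 0" using yS by (simp add: k_def S_def)
    have cnz: "c y \<noteq> 0" using qpos[OF yS] by (simp add: c_def)
    have "proj (Umap lam F1 F2 (sect lam0 y)) = f (proj (sect lam0 y))"
      using cover sect_in[OF yS] f1y kpos by (simp add: f1_def sect_eq)
    moreover have "proj (sect lam0 y) = y" using kpos by (simp add: proj_def sect_eq)
    moreover have "proj (Umap lam F1 F2 (sect lam0 y)) = f2 y / f1 y"
      using cnz by (simp add: proj_def Umap_eq)
    ultimately show ?thesis by simp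
  qed
  obtain Df1 where Df1: "(f1 has_derivative Df1) (at z)" using f12d[OF zS] differentiable_def by blast
  obtain Df2 where Df2: "(f2 has_derivative Df2) (at z)" using f12d[OF zS] differentiable_def by blast
  define a where "a = f1 z"
  define b where "b = f2 z"
  define da where "da = Df1 v"
  define db where "db = Df2 v"
  define N where "N = sqrt (q z)"
  define m where "m = cmod a"
  define l where "l = complex_of_real lam"
  have anz: "a \<noteq> 0" using zT T_def a_def by auto
  have Npos: "N > 0" using qpos[OF zS] N_def by simp
  have mpos: "m > 0" using anz m_def by simp
  have hN: "of_real N * of_real N = a * cnj a - l * b * cnj b"
  proof -
    have "N * N = q z" using qpos[OF zS] N_def by simp
    then have "complex_of_real N * of_real N = complex_of_real (q z)" by (metis of_real_mult)
    also have "\<dots> = a * cnj a - l * b * cnj b"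
      by (simp add: q_def inner_complex_eq a_def b_def l_def field_simps)
    finally show ?thesis .
  qed
  have hm: "of_real m * of_real m = a * cnj a"
  proof -
    have "complex_of_real m * of_real m = of_real ((cmod a)^2)" by (simp add: m_def power2_eq_square)
    then show ?thesis using complex_norm_square by metis
  qed
  have fder: "frechet_derivative f (at z) v = (db*a - b*da)/(a*a)"
  proof -
    have f1z: "f1 z \<noteq> 0" using anz a_def by simp
    have hd: "((\<lambda>y. f2 y / f1 y) has_derivative (\<lambda>h. (Df2 h * f1 z - f2 z * Df1 h)/(f1 z * f1 z))) (at z)"
      by (rule has_derivative_eq_rhs[OF has_derivative_divide[OF Df2 Df1 f1z]]) (use f1z in \<open>auto simp: field_simps\<close>)
    have "(f has_derivative (\<lambda>h. (Df2 h * f1 z - f2 z * Df1 h)/(f1 z * f1 z))) (at z)"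
      by (rule has_derivative_transform_within_open[OF hd openT zT]) (simp add: f_eq)
    then have "frechet_derivative f (at z) = (\<lambda>h. (Df2 h * f1 z - f2 z * Df1 h)/(f1 z * f1 z))"
      by (rule frechet_derivative_at[symmetric])
    then show ?thesis by (simp add: a_def b_def da_def db_def)
  qed
  have Uder: "frechet_derivative (Umap lam F1 F2 \<circ> sect lam0) (at z) v =
     mat2 (-(a*cnj da + cnj a*da - l*(b*cnj db + cnj b*db))/(2* of_real N^3)*a + da/ of_real N)
          (-(a*cnj da + cnj a*da - l*(b*cnj db + cnj b*db))/(2* of_real N^3)*(l*cnj b) + l*cnj db/ of_real N)
          (-(a*cnj da + cnj a*da - l*(b*cnj db + cnj b*db))/(2* of_real N^3)*b + db/ of_real N)
          (-(a*cnj da + cnj a*da - l*(b*cnj db + cnj b*db))/(2* of_real N^3)*cnj a + cnj da/ of_real N)"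
  proof -
    have hq: "(q has_derivative (\<lambda>h. 2*(f1 z \<bullet> Df1 h) - lam*(2*(f2 z \<bullet> Df2 h)))) (at z)"
      unfolding q_def[abs_def]
      by (rule has_derivative_eq_rhs, (rule derivative_intros Df1 Df2)+) (auto simp: inner_commute)
    have qz: "q z > 0" using qpos[OF zS] .
    have hs: "((\<lambda>y. 1 / sqrt (q y)) has_derivative (\<lambda>h. -(2*(f1 z \<bullet> Df1 h) - lam*(2*(f2 z \<bullet> Df2 h)))/(2*N^3))) (at z)"
    proof -
      have sqnz: "sqrt (q z) \<noteq> 0" using qz by simp
      note hs0 = has_derivative_divide[OF has_derivative_const has_derivative_real_sqrt[OF qz hq] sqnz]
      show ?thesis
        apply (rule has_derivative_eq_rhs[OF hs0])
        apply (rule ext)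
        using sqnz unfolding N_def by (simp add: field_simps power3_eq_cube)
    qed
    have hc: "(c has_derivative (\<lambda>h. complex_of_real (-(2*(f1 z \<bullet> Df1 h) - lam*(2*(f2 z \<bullet> Df2 h)))/(2*N^3)))) (at z)"
      unfolding c_def[abs_def] by (rule has_derivative_of_real[OF hs])
    note HD = mat2_has_derivative[OF has_derivative_mult[OF hc Df1]
       has_derivative_mult[OF hc has_derivative_mult[OF has_derivative_const has_derivative_cnj[OF Df2]]]
       has_derivative_mult[OF hc Df2] has_derivative_mult[OF hc has_derivative_cnj[OF Df1]]]
    have UE: "Umap lam F1 F2 \<circ> sect lam0 = (\<lambda>y. mat2 (c y * f1 y) (c y * (of_real lam * cnj (f2 y))) (c y * f2 y) (c y * cnj (f1 y)))"
      by (rule ext) (simp add: Umap_eq)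
    have cz: "c z = 1 / of_real N" by (simp add: c_def N_def)
    have Nnz: "complex_of_real N \<noteq> 0" using Npos by simp
    show ?thesis unfolding UE frechet_derivative_at[OF HD, symmetric]
      using Nnz
      by (simp add: mat2_eq_iff cz inner_complex_eq a_def b_def da_def db_def l_def field_simps)
  qed
  have rder: "frechet_derivative (rmat (F1 \<circ> sect lam0)) (at z) v =
     mat2 (cnj da/ of_real m - cnj a*((a*cnj da + cnj a*da)/(2* of_real m))/(of_real m* of_real m)) 0 0
          (da/ of_real m - a*((a*cnj da + cnj a*da)/(2* of_real m))/(of_real m* of_real m))"
  proof -
    have f1z: "f1 z \<noteq> 0" using anz a_def by simp
    have hn: "((\<lambda>y. cmod (f1 y)) has_derivative (\<lambda>h. Df1 h \<bullet> sgn (f1 z))) (at z)"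
      using has_derivative_compose[OF Df1 has_derivative_norm[OF f1z]] by simp
    have gnz: "complex_of_real (cmod (f1 z)) \<noteq> 0" using f1z by simp
    note RD = mat2_has_derivative[OF has_derivative_divide[OF has_derivative_cnj[OF Df1] has_derivative_of_real[OF hn] gnz]
       has_derivative_const has_derivative_const has_derivative_divide[OF Df1 has_derivative_of_real[OF hn] gnz]]
    have RE: "rmat (F1 \<circ> sect lam0) = (\<lambda>y. mat2 (cnj (f1 y) / of_real (cmod (f1 y))) 0 0 (f1 y / of_real (cmod (f1 y))))"
      by (rule ext) (simp add: rmat_def f1_def)
    have mnz: "complex_of_real m \<noteq> 0" using mpos by simp
    have sg: "complex_of_real (da \<bullet> sgn a) = (a * cnj da + cnj a * da) / (2 * of_real m)"
      using mnz by (simp add: sgn_div_norm inner_complex_eq m_def field_simps)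
    show ?thesis unfolding RE frechet_derivative_at[OF RD, symmetric]
      using mnz sg
      by (simp add: mat2_eq_iff a_def[symmetric] da_def[symmetric] m_def[symmetric] field_simps)
  qed
  have rz: "rmat (F1 \<circ> sect lam0) z = mat2 (cnj a/ of_real m) 0 0 (a/ of_real m)"
    by (simp add: rmat_def a_def m_def f1_def)
  have rinv: "matrix_inv (rmat (F1 \<circ> sect lam0) z) = mat2 (a/ of_real m) 0 0 (cnj a/ of_real m)"
    unfolding rz using hm mpos
    by (intro matrix_inv_eq) (auto simp: mat2_mult mat2_one mat2_eq_iff field_simps)
  have Uz: "Umap lam F1 F2 (sect lam0 z) = mat2 (a/ of_real N) (l*cnj b/ of_real N) (b/ of_real N) (cnj a/ of_real N)"
    by (simp add: Umap_eq c_def N_def a_def b_def l_def)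
  have Uinv: "matrix_inv (Umap lam F1 F2 (sect lam0 z)) = mat2 (cnj a/ of_real N) (-l*cnj b/ of_real N) (-b/ of_real N) (a/ of_real N)"
    unfolding Uz using hN Npos
    by (intro matrix_inv_eq) (auto simp: mat2_mult mat2_one mat2_eq_iff field_simps)
  have fz: "f z = b / a" using f_eq[OF zT] a_def b_def by simp
  have Dnz: "1 - l * (b/a) * cnj (b/a) \<noteq> 0"
  proof -
    have "1 - l * (b/a) * cnj (b/a) = (of_real N * of_real N) / (a * cnj a)"
      using hN anz by (simp add: complex_cnj_divide field_simps)
    then show ?thesis using Npos anz by simp
  qed
  show "Ahat lam (f z) (frechet_derivative f (at z) v)
                = matrix_inv (rmat (F1 \<circ> sect lam0) z)
                    ** (matrix_inv (Umap lam F1 F2 (sect lam0 z))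
                        ** frechet_derivative (Umap lam F1 F2 \<circ> sect lam0) (at z) v)
                    ** rmat (F1 \<circ> sect lam0) z
                  + matrix_inv (rmat (F1 \<circ> sect lam0) z)
                    ** frechet_derivative (rmat (F1 \<circ> sect lam0)) (at z) v"
    unfolding fz fder Uder rder Uinv rz rinv[unfolded rz] Ahat_mat2[OF Dnz[unfolded l_def]]
    apply (fold l_def)
    apply (rule alg)
    using Npos mpos anz hN hm by (auto simp: complex_cnj_divide)
qed

end
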